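(* Let $\mathbf{D}\in\mathbb{R}^{N\times N}$, $\mathbf{H}\in\mathbb{R}^{N\times L}$, $\mathbf{A}\in\mathbb{R}^{m\times N}$ with $m<N$, and consider the system $\mathbf{x}_k=\mathbf{D}\mathbf{x}_{k-1}+\mathbf{H}\mathbf{h}_k$, $\mathbf{y}_k=\mathbf{A}\mathbf{x}_k$, with unconstrained inputs $\mathbf{h}_k\in\mathbb{R}^L$. If the system is output controllable, then for all $\lambda\in\mathbb{C}$ the matrix $\mathbf{A}\begin{bmatrix}\lambda\mathbf{I}-\mathbf{D} & \mathbf{H}\end{bmatrix}\in\mathbb{C}^{m\times(N+L)}$ has rank $m$.
   Context: The system is output controllable if for every initial state $\mathbf{x}_0\in\mathbb{R}^N$ and every desired output $\mathbf{y}\in\mathbb{R}^m$ there exist a finite $K$ and inputs $\mathbf{h}_1,\dots,\mathbf{h}_K\in\mathbb{R}^L$ such that $\mathbf{y}_K=\mathbf{A}\mathbf{x}_K=\mathbf{y}$. *)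

theory Defs
  imports "HOL-Analysis.Analysis"
begin

primrec state :: "real^'n^'n \<Rightarrow> real^'l^'n \<Rightarrow> real^'n \<Rightarrow> (nat \<Rightarrow> real^'l) \<Rightarrow> nat \<Rightarrow> real^'n" where
  "state D H x0 h 0 = x0"
| "state D H x0 h (Suc k) = D *v state D H x0 h k + H *v h (Suc k)"

definition output_controllable :: "real^'n^'n \<Rightarrow> real^'l^'n \<Rightarrow> real^'n^'m \<Rightarrow> bool" where
  "output_controllable D H A \<longleftrightarrow>
     (\<forall>x0 y. \<exists>K h. A *v state D H x0 h K = y)"

definition cmat :: "real^'c^'r \<Rightarrow> complex^'c^'r" where
  "cmat M = (\<chi> i j. complex_of_real (M $ i $ j))"

definition pbh_block :: "complex \<Rightarrow> real^'n^'n \<Rightarrow> real^'l^'n \<Rightarrow> complex^('n + 'l)^'n" where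
  "pbh_block z D H = (\<chi> i j. case j of
       Inl c \<Rightarrow> (if i = c then z else 0) - complex_of_real (D $ i $ c)
     | Inr c \<Rightarrow> complex_of_real (H $ i $ c))"

end

theory Submission
  imports Defs
begin

lemma rank_full_crit:
  fixes M :: "'a::field^'k^'m"
  assumes H: "\<And>w. (\<forall>j. (\<Sum>i\<in>UNIV. w i * M$i$j) = 0) \<Longrightarrow> (\<forall>i. w i = 0)"
  shows "rank M = CARD('m)"
proof -
  have inj: "inj (\<lambda>i. row i M)"
  proof (rule injI, rule ccontr)
    fix i j assume eq: "row i M = row j M" and ne: "i \<noteq> j"
    define w where "w = (\<lambda>k. if k = i then (1::'a) else if k = j then -1 else 0)"
    have "\<forall>c. (\<Sum>k\<in>UNIV. w k * M$k$c) = 0"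
    proof
      fix c
      have "(\<Sum>k\<in>UNIV. w k * M$k$c) = (\<Sum>k\<in>{i,j}. w k * M$k$c)"
        by (rule sum.mono_neutral_right) (auto simp: w_def)
      also have "\<dots> = M$i$c - M$j$c" using ne by (simp add: w_def)
      also have "\<dots> = 0" using eq by (metis row_def vec_lambda_beta right_minus_eq)
      finally show "(\<Sum>k\<in>UNIV. w k * M$k$c) = 0" .
    qed
    then have "w i = 0" using H by blast
    then show False by (simp add: w_def)
  qed
  have rows_eq: "rows M = range (\<lambda>i. row i M)" by (auto simp: rows_def)
  have indep: "vec.independent (rows M)"
  proof
    assume dep: "vec.dependent (rows M)"
    have "finite (rows M)" by (simp add: rows_eq)
    then obtain u where u1: "\<exists>v\<in>rows M. u v \<noteq> 0" and u2: "(\<Sum>v\<in>rows M. u v *s v) = 0"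
      using dep vec.dependent_finite by blast
    have "(\<Sum>v\<in>rows M. u v *s v) = (\<Sum>i\<in>UNIV. u (row i M) *s row i M)"
      unfolding rows_eq by (rule sum.reindex[OF inj, unfolded o_def])
    then have "\<forall>j. (\<Sum>i\<in>UNIV. u (row i M) * M$i$j) = 0"
      using u2 by (auto simp: vec_eq_iff sum_component row_def)
    then have "\<forall>i. u (row i M) = 0" using H[of "\<lambda>i. u (row i M)"] by blast
    then show False using u1 rows_eq by auto
  qed
  have "rank M = card (rows M)"
    unfolding row_rank_def_gen by (rule vec.dim_eq_card_independent[OF indep])
  also have "\<dots> = CARD('m)" unfolding rows_eq by (simp add: card_image[OF inj])
  finally show ?thesis .
qed

theorem proposition1:
  fixes D :: "real^'n^'n" and H :: "real^'l^'n" and A :: "real^'n^'m"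
  assumes "CARD('m) < CARD('n)"
    and "output_controllable D H A"
  shows "\<forall>z::complex. rank (cmat A ** pbh_block z D H) = CARD('m)"
proof
  fix z :: complex
  show "rank (cmat A ** pbh_block z D H) = CARD('m)"
  proof (rule rank_full_crit)
    fix w :: "'m \<Rightarrow> complex"
    assume W: "\<forall>j. (\<Sum>i\<in>UNIV. w i * (cmat A ** pbh_block z D H)$i$j) = 0"
    define v where "v = (\<lambda>k. \<Sum>i\<in>UNIV. w i * complex_of_real (A$i$k))"
    have ent: "(\<Sum>i\<in>UNIV. w i * (cmat A ** pbh_block z D H)$i$j) = (\<Sum>k\<in>UNIV. v k * pbh_block z D H $k$j)" for j
    proof -
      have "(\<Sum>i\<in>UNIV. w i * (cmat A ** pbh_block z D H)$i$j)
          = (\<Sum>i\<in>UNIV. \<Sum>k\<in>UNIV. w i * (complex_of_real (A$i$k) * pbh_block z D H $k$j))"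
        by (simp add: matrix_matrix_mult_def cmat_def sum_distrib_left)
      also have "\<dots> = (\<Sum>k\<in>UNIV. \<Sum>i\<in>UNIV. w i * (complex_of_real (A$i$k) * pbh_block z D H $k$j))"
        by (rule sum.swap)
      also have "\<dots> = (\<Sum>k\<in>UNIV. v k * pbh_block z D H $k$j)"
        by (simp add: v_def sum_distrib_right mult.assoc)
      finally show ?thesis .
    qed
    have vD: "(\<Sum>k\<in>UNIV. v k * complex_of_real (D$k$c)) = z * v c" for c
    proof -
      have "0 = (\<Sum>k\<in>UNIV. v k * ((if k = c then z else 0) - complex_of_real (D$k$c)))"
        using W ent[of "Inl c"] by (simp add: pbh_block_def)
      also have "\<dots> = z * v c - (\<Sum>k\<in>UNIV. v k * complex_of_real (D$k$c))"
      proof -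
        have "(\<Sum>k\<in>UNIV. v k * (if k = c then z else 0)) = z * v c"
        proof -
          have "(\<Sum>k\<in>UNIV. v k * (if k = c then z else 0)) = (\<Sum>k\<in>UNIV. if k = c then v k * z else 0)"
            by (rule sum.cong) auto
          then show ?thesis by (simp add: mult.commute)
        qed
        then show ?thesis by (simp only: right_diff_distrib sum_subtractf)
      qed
      finally show ?thesis by simp
    qed
    have vH: "(\<Sum>k\<in>UNIV. v k * complex_of_real (H$k$c)) = 0" for c
      using W ent[of "Inr c"] by (simp add: pbh_block_def)
    define f where "f = (\<lambda>h k. \<Sum>n\<in>UNIV. v n * complex_of_real (state D H 0 h k $ n))"
    have f0: "f h k = 0" for h k
    proof (induction k)
      case 0 then show ?case by (simp add: f_def)
    next
      case (Suc k)
      let ?x = "state D H 0 h k"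
      have "f h (Suc k) = (\<Sum>n\<in>UNIV. v n * ((\<Sum>c\<in>UNIV. complex_of_real (D$n$c) * complex_of_real (?x$c))
               + (\<Sum>c\<in>UNIV. complex_of_real (H$n$c) * complex_of_real (h (Suc k) $ c))))"
        by (simp add: f_def matrix_vector_mult_def)
      also have "\<dots> = (\<Sum>n\<in>UNIV. \<Sum>c\<in>UNIV. v n * complex_of_real (D$n$c) * complex_of_real (?x$c))
               + (\<Sum>n\<in>UNIV. \<Sum>c\<in>UNIV. v n * complex_of_real (H$n$c) * complex_of_real (h (Suc k) $ c))"
        by (simp add: distrib_left sum.distrib sum_distrib_left mult.assoc)
      also have "\<dots> = (\<Sum>c\<in>UNIV. \<Sum>n\<in>UNIV. v n * complex_of_real (D$n$c) * complex_of_real (?x$c))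
               + (\<Sum>c\<in>UNIV. \<Sum>n\<in>UNIV. v n * complex_of_real (H$n$c) * complex_of_real (h (Suc k) $ c))"
        by (rule arg_cong2[where f="(+)"]; rule sum.swap)
      also have "\<dots> = (\<Sum>c\<in>UNIV. (\<Sum>n\<in>UNIV. v n * complex_of_real (D$n$c)) * complex_of_real (?x$c))
               + (\<Sum>c\<in>UNIV. (\<Sum>n\<in>UNIV. v n * complex_of_real (H$n$c)) * complex_of_real (h (Suc k) $ c))"
        by (simp add: sum_distrib_right)
      also have "\<dots> = z * f h k"
        by (simp add: vD vH f_def sum_distrib_left mult.assoc)
      finally show ?case using Suc by simp
    qed
    show "\<forall>i. w i = 0"
    proof
      fix i0
      obtain K h where Y: "A *v state D H 0 h K = axis i0 1"
        using assms(2) unfolding output_controllable_def by blast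
      have "f h K = (\<Sum>n\<in>UNIV. \<Sum>i\<in>UNIV. w i * complex_of_real (A$i$n) * complex_of_real (state D H 0 h K $ n))"
        by (simp add: f_def v_def sum_distrib_right)
      also have "\<dots> = (\<Sum>i\<in>UNIV. \<Sum>n\<in>UNIV. w i * complex_of_real (A$i$n) * complex_of_real (state D H 0 h K $ n))"
        by (rule sum.swap)
      also have "\<dots> = (\<Sum>i\<in>UNIV. w i * complex_of_real ((A *v state D H 0 h K) $ i))"
        by (simp add: matrix_vector_mult_def sum_distrib_left mult.assoc)
      also have "\<dots> = (\<Sum>i\<in>UNIV. w i * (if i = i0 then 1 else 0))"
        by (rule sum.cong) (auto simp: Y axis_def)
      also have "\<dots> = w i0" by (simp add: if_distrib cong: if_cong)
      finally show "w i0 = 0" using f0 by simp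
    qed
  qed
qed

end
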